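(* Every palindromic composition $\beta$ is $\mathcal{L}$-unique; that is, if $\alpha$ is a composition with $\mathcal{L}(\alpha,\mathbf{x})=\mathcal{L}(\beta,\mathbf{x})$, then $\alpha=\beta$.
   Context: A composition is a finite nonempty sequence $\beta=\beta_1\cdots\beta_k$ of positive integers; it is a palindrome if $\beta_k\cdots\beta_1=\beta$. The type $\lambda(\alpha)$ of a composition is the partition obtained by sorting its parts in weakly decreasing order; for a partition $\lambda=\lambda_1\cdots\lambda_l$, $\mathbf{x}_\lambda=x_{\lambda_1}\cdots x_{\lambda_l}$ in commuting indeterminates $x_1,x_2,\ldots$. A composition $\alpha$ is a coarsening of $\beta$, $\alpha\succeq\beta$, if $\alpha$ arises from $\beta$ by summing blocks of consecutive parts. The $\mathcal{L}$-polynomial is $\mathcal{L}(\beta,\mathbf{x})=\sum_{\alpha\succeq\beta}\mathbf{x}_{\lambda(\alpha)}$. A composition $\beta$ is $\mathcal{L}$-unique if the set of compositions with the same $\mathcal{L}$-polynomial as $\beta$ equals $\{\beta,\text{reverse of }\beta\}$. *)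

theory Defs
  imports Main "HOL-Library.Multiset"
begin

definition composition :: "nat list \<Rightarrow> bool" where
  "composition \<beta> \<longleftrightarrow> \<beta> \<noteq> [] \<and> (\<forall>b\<in>set \<beta>. 0 < b)"

definition palindrome :: "nat list \<Rightarrow> bool" where
  "palindrome \<beta> \<longleftrightarrow> rev \<beta> = \<beta>"

definition coarsening :: "nat list \<Rightarrow> nat list \<Rightarrow> bool" where
  "coarsening \<alpha> \<beta> \<longleftrightarrow>
     (\<exists>bs. concat bs = \<beta> \<and> (\<forall>b\<in>set bs. b \<noteq> []) \<and> \<alpha> = map sum_list bs)"

text \<open>A monomial x_lambda = x_{lambda_1} ... x_{lambda_l} is
  represented by the multiset of its indices (= the partition lambda, i.e. the type
  mset alpha of alpha); a polynomial with coefficients in nat is represented by the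
  multiset of its monomials (coefficient = multiplicity).\<close>
definition Lpoly :: "nat list \<Rightarrow> nat multiset multiset" where
  "Lpoly \<beta> = image_mset mset (mset_set {\<alpha>. coarsening \<alpha> \<beta>})"

definition L_unique :: "nat list \<Rightarrow> bool" where
  "L_unique \<beta> \<longleftrightarrow> {\<alpha>. composition \<alpha> \<and> Lpoly \<alpha> = Lpoly \<beta>} = {\<beta>, rev \<beta>}"

end

theory Submission
  imports Defs
begin

definition psums :: "nat list \<Rightarrow> nat set" where
  "psums g = {sum_list (take i g) | i. 0 < i \<and> i < length g}"

lemma psums_single: "psums [a] = {}"
  by (auto simp: psums_def)

lemma psums_Cons: "psums (a # y # xs) = insert a ((+) a ` psums (y # xs))"
proof (rule set_eqI)
  fix x
  show "x \<in> psums (a # y # xs) \<longleftrightarrow> x \<in> insert a ((+) a ` psums (y # xs))"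
  proof
    assume "x \<in> psums (a # y # xs)"
    then obtain i where i: "0 < i" "i < length (a#y#xs)" "x = sum_list (take i (a#y#xs))"
      by (auto simp: psums_def)
    then obtain j where j: "i = Suc j" by (cases i) auto
    show "x \<in> insert a ((+) a ` psums (y # xs))"
    proof (cases j)
      case 0 then show ?thesis using i j by simp
    next
      case (Suc k)
      have "sum_list (take j (y#xs)) \<in> psums (y#xs)"
        unfolding psums_def using i j Suc by (intro CollectI exI[of _ j]) auto
      then show ?thesis using i j by auto
    qed
  next
    assume "x \<in> insert a ((+) a ` psums (y # xs))"
    then show "x \<in> psums (a # y # xs)"
    proof
      assume "x = a"
      then show ?thesis unfolding psums_def by (intro CollectI exI[of _ 1]) auto
    next
      assume "x \<in> (+) a ` psums (y # xs)"
      then obtain j where "0 < j" "j < length (y#xs)" "x = a + sum_list (take j (y#xs))"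
        by (auto simp: psums_def)
      then show ?thesis unfolding psums_def by (intro CollectI exI[of _ "Suc j"]) auto
    qed
  qed
qed

lemma psums_pos: "\<forall>b\<in>set g. 0 < b \<Longrightarrow> x \<in> psums g \<Longrightarrow> 0 < x"
  by (cases g) (auto simp: psums_def gr0_conv_Suc)

lemma psums_inj:
  "\<forall>b\<in>set a. 0 < b \<Longrightarrow> \<forall>b\<in>set b. 0 < b \<Longrightarrow> a \<noteq> [] \<Longrightarrow> b \<noteq> []
   \<Longrightarrow> sum_list a = sum_list b \<Longrightarrow> psums a = psums b \<Longrightarrow> a = b"
proof (induction a arbitrary: b)
  case Nil then show ?case by simp
next
  case (Cons x a')
  obtain z b' where b: "b = z # b'" using Cons.prems by (cases b) auto
  show ?case
  proof (cases a')
    case Nil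
    then have "psums b = {}" using Cons.prems psums_single by simp
    then have "b' = []" using b by (cases b') (auto simp: psums_Cons)
    then show ?thesis using Nil b Cons.prems by simp
  next
    case (Cons y xs)
    then have "x \<in> psums b" using Cons.prems(6) psums_Cons by auto
    then obtain w ws where bw: "b' = w # ws" using b psums_single by (cases b') auto
    have A: "psums (x#a') = insert x ((+) x ` psums a')" using Cons psums_Cons by simp
    have B: "psums b = insert z ((+) z ` psums b')" using bw b psums_Cons by simp
    have pa: "\<forall>p\<in>psums a'. 0 < p" using psums_pos Cons.prems(1) by auto
    have pb: "\<forall>p\<in>psums b'. 0 < p" using psums_pos Cons.prems(2) b by auto
    have "x = z"
    proof (rule ccontr)
      assume ne: "x \<noteq> z"
      have "x \<in> psums b" "z \<in> psums (x#a')" using A B Cons.prems(6) by auto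
      then have "z < x" "x < z" using A B ne pa pb by fastforce+
      then show False by simp
    qed
    have n1: "x \<notin> (+) x ` psums a'" using pa by auto
    have n2: "x \<notin> (+) x ` psums b'" using pb by auto
    have "insert x ((+) x ` psums a') = insert x ((+) x ` psums b')"
      using A B Cons.prems(6) \<open>x = z\<close> by simp
    then have "(+) x ` psums a' = (+) x ` psums b'"
      using insert_ident[OF n1 n2] by blast
    then have "psums a' = psums b'" by (simp add: inj_image_eq_iff)
    moreover have "sum_list a' = sum_list b'" using Cons.prems(5) b \<open>x = z\<close> by simp
    ultimately have "a' = b'" using Cons.IH[of b'] Cons.prems b bw \<open>a' = y # xs\<close> by simp
    then show ?thesis using b \<open>x = z\<close> by simp
  qed
qed

lemma sum_concat: "sum_list (map sum_list bs) = sum_list (concat (bs :: nat list list))"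
  by (induction bs) auto

lemma coarsening_sum: "coarsening a g \<Longrightarrow> sum_list a = sum_list g"
  unfolding coarsening_def using sum_concat by auto

lemma len_concat: "\<forall>b\<in>set bs. b \<noteq> [] \<Longrightarrow> length bs \<le> length (concat bs)"
proof (induction bs)
  case (Cons b bs) then show ?case by (cases b) auto
qed simp

lemma finite_coarsenings: "finite {a. coarsening a g}"
proof (rule finite_subset)
  show "{a. coarsening a g} \<subseteq> {xs. set xs \<subseteq> {0..sum_list g} \<and> length xs \<le> length g}"
  proof
    fix a assume "a \<in> {a. coarsening a g}"
    then obtain bs where bs: "concat bs = g" "\<forall>b\<in>set bs. b \<noteq> []" "a = map sum_list bs"
      unfolding coarsening_def by auto
    have "length a \<le> length g" using len_concat[OF bs(2)] bs by simp
    moreover have "set a \<subseteq> {0..sum_list g}"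
      using coarsening_sum[of a g] \<open>a \<in> _\<close> member_le_sum_list[of _ a] by auto
    ultimately show "a \<in> {xs. set xs \<subseteq> {0..sum_list g} \<and> length xs \<le> length g}" by simp
  qed
qed (intro finite_lists_length_le, simp)

lemma count_img: "finite A \<Longrightarrow> count (image_mset f (mset_set A)) x = card {a\<in>A. f a = x}"
proof -
  assume fA: "finite A"
  have "count (image_mset f (mset_set A)) x = (\<Sum>y\<in>f -` {x} \<inter> set_mset (mset_set A). count (mset_set A) y)"
    by (rule count_image_mset)
  also have "\<dots> = (\<Sum>y\<in>f -` {x} \<inter> A. 1)"
    using fA by (intro sum.cong) auto
  also have "\<dots> = card (f -` {x} \<inter> A)" by simp
  also have "f -` {x} \<inter> A = {a\<in>A. f a = x}" by auto
  finally show ?thesis .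
qed

lemma coars2:
  assumes "s \<le> sum_list g"
  shows "coarsening [s, sum_list g - s] g \<longleftrightarrow> s \<in> psums g"
proof
  assume "coarsening [s, sum_list g - s] g"
  then obtain bs where bs0: "concat bs = g \<and> (\<forall>b\<in>set bs. b \<noteq> []) \<and> [s, sum_list g - s] = map sum_list bs"
    unfolding coarsening_def ..
  then have bs: "concat bs = g" "\<forall>b\<in>set bs. b \<noteq> []" "[s, sum_list g - s] = map sum_list bs" by simp_all
  have "length bs = 2" using arg_cong[OF bs(3), of length] by simp
  then obtain b1 b2 where b12: "bs = [b1, b2]" by (auto simp: numeral_2_eq_2 length_Suc_conv)
  then have "g = b1 @ b2" "b1 \<noteq> []" "b2 \<noteq> []" "s = sum_list b1" using bs by simp_all
  then show "s \<in> psums g" unfolding psums_def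
    by (intro CollectI exI[of _ "length b1"]) auto
next
  assume "s \<in> psums g"
  then obtain i where i: "0 < i" "i < length g" "s = sum_list (take i g)"
    by (auto simp: psums_def)
  have "sum_list (take i g) + sum_list (drop i g) = sum_list g"
    by (metis append_take_drop_id sum_list_append)
  then have d: "sum_list g - s = sum_list (drop i g)" using i(3) by linarith
  have ne: "take i g \<noteq> []" "drop i g \<noteq> []" using i by auto
  show "coarsening [s, sum_list g - s] g" unfolding coarsening_def
    by (rule exI[of _ "[take i g, drop i g]"]) (use i in \<open>auto simp: d ne d[unfolded i(3)]\<close>)
qed

lemma psums_le: "x \<in> psums g \<Longrightarrow> x \<le> sum_list g"
proof -
  assume "x \<in> psums g"
  then obtain i where "x = sum_list (take i g)" by (auto simp: psums_def)
  moreover have "sum_list (take i g) + sum_list (drop i g) = sum_list g"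
    by (metis append_take_drop_id sum_list_append)
  ultimately show ?thesis by linarith
qed

lemma mset2: "mset a = {#s, t#} \<Longrightarrow> a = [s, t] \<or> a = [t, s]"
proof -
  assume h: "mset a = {#s, t#}"
  have "size (mset a) = 2" unfolding h by simp
  then have "length a = 2" by simp
  then obtain u v where "a = [u, v]" by (auto simp: numeral_2_eq_2 length_Suc_conv)
  then show ?thesis using h by (auto simp: add_eq_conv_diff)
qed

lemma count_Lpoly:
  assumes "s \<le> sum_list g"
  shows "count (Lpoly g) {#s, sum_list g - s#} = card (psums g \<inter> {s, sum_list g - s})"
proof -
  let ?n = "sum_list g"
  have "count (Lpoly g) {#s, ?n - s#} = card {a\<in>{a. coarsening a g}. mset a = {#s, ?n - s#}}"
    unfolding Lpoly_def using finite_coarsenings by (rule count_img)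
  also have "{a\<in>{a. coarsening a g}. mset a = {#s, ?n - s#}} = (\<lambda>t. [t, ?n - t]) ` (psums g \<inter> {s, ?n - s})"
  proof (rule set_eqI, rule iffI)
    fix a assume "a \<in> {a\<in>{a. coarsening a g}. mset a = {#s, ?n - s#}}"
    then have c: "coarsening a g" and "mset a = {#s, ?n - s#}" by auto
    then have "a = [s, ?n - s] \<or> a = [?n - s, s]" using mset2[of a] by blast
    then consider "a = [s, ?n - s]" | "a = [?n - s, ?n - (?n - s)]" using assms by auto
    then show "a \<in> (\<lambda>t. [t, ?n - t]) ` (psums g \<inter> {s, ?n - s})"
    proof cases
      case 1 then show ?thesis using c coars2[OF assms] by auto
    next
      case 2 then show ?thesis using c coars2[of "?n - s" g] by auto
    qed
  next
    fix a assume "a \<in> (\<lambda>t. [t, ?n - t]) ` (psums g \<inter> {s, ?n - s})"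
    then obtain t where t: "a = [t, ?n - t]" "t \<in> psums g" "t \<in> {s, ?n - s}" by auto
    then have "coarsening a g" using coars2[of t g] psums_le by auto
    moreover have "mset a = {#s, ?n - s#}" using t assms by (auto simp: add_mset_commute)
    ultimately show "a \<in> {a\<in>{a. coarsening a g}. mset a = {#s, ?n - s#}}" by simp
  qed
  also have "card \<dots> = card (psums g \<inter> {s, ?n - s})"
    by (rule card_image) (auto simp: inj_on_def)
  finally show ?thesis .
qed

lemma sum_eq:
  assumes "composition g" "Lpoly a = Lpoly g"
  shows "sum_list a = sum_list g"
proof -
  have "coarsening [sum_list g] g" unfolding coarsening_def using assms(1)
    by (intro exI[of _ "[g]"]) (auto simp: composition_def)
  then have "{#sum_list g#} \<in># Lpoly g" unfolding Lpoly_def using finite_coarsenings by force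
  then have "{#sum_list g#} \<in># Lpoly a" using assms by simp
  then obtain c where c: "coarsening c a" "mset c = {#sum_list g#}"
    unfolding Lpoly_def using finite_coarsenings by auto
  then have "c = [sum_list g]" by (cases c) auto
  then show ?thesis using coarsening_sum[OF c(1)] by simp
qed

lemma main:
  assumes cb: "composition b" and pb: "palindrome b" and ca: "composition a"
    and eq: "Lpoly a = Lpoly b"
  shows "a = b"
proof -
  let ?n = "sum_list b"
  have sn: "sum_list a = ?n" using sum_eq[OF cb eq] .
  let ?U = "psums a" let ?S = "psums b"
  have fin: "finite ?U" "finite ?S" unfolding psums_def by auto
  have cardeq: "card (?U \<inter> {s, ?n - s}) = card (?S \<inter> {s, ?n - s})" if "s \<le> ?n" for s
    using count_Lpoly[of s a] count_Lpoly[of s b] that sn eq by simp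
  have sym: "?n - s \<in> ?S" if "s \<in> ?S" for s
  proof -
    from that obtain i where i: "0 < i" "i < length b" "s = sum_list (take i b)"
      by (auto simp: psums_def)
    have "sum_list (take i b) + sum_list (drop i b) = ?n"
      by (metis append_take_drop_id sum_list_append)
    then have "?n - s = sum_list (rev (drop i b))" using i by simp
    also have "\<dots> = sum_list (take (length b - i) b)"
      using pb by (simp add: rev_drop palindrome_def)
    finally show ?thesis unfolding psums_def using i by (intro CollectI exI[of _ "length b - i"]) auto
  qed
  have "?U = ?S"
  proof (rule set_eqI, rule iffI)
    fix x assume xU: "x \<in> ?U"
    then have xn: "x \<le> ?n" using psums_le sn by metis
    show "x \<in> ?S"
    proof (rule ccontr)
      assume "x \<notin> ?S"
      moreover have "?n - x \<notin> ?S" using sym \<open>x \<notin> ?S\<close> xn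
        by (metis diff_diff_cancel)
      ultimately have "card (?S \<inter> {x, ?n - x}) = 0" by (simp add: Int_insert_right)
      then have "card (?U \<inter> {x, ?n - x}) = 0" using cardeq xn by simp
      then have "?U \<inter> {x, ?n - x} = {}" using fin by simp
      then show False using xU by auto
    qed
  next
    fix x assume xS: "x \<in> ?S"
    then have xn: "x \<le> ?n" using psums_le by metis
    have "?S \<inter> {x, ?n - x} = {x, ?n - x}" using sym xS by auto
    then have "card (?U \<inter> {x, ?n - x}) = card {x, ?n - x}" using cardeq xn by simp
    then have "?U \<inter> {x, ?n - x} = {x, ?n - x}"
      by (intro card_subset_eq) auto
    then show "x \<in> ?U" by auto
  qed
  note U = this
  have p: "\<forall>x\<in>set a. 0 < x" "\<forall>x\<in>set b. 0 < x" "a \<noteq> []" "b \<noteq> []"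
    using ca cb by (auto simp: composition_def)
  show ?thesis by (rule psums_inj[OF p sn U])
qed

theorem proposition3p6:
  fixes \<beta> :: "nat list"
  assumes "composition \<beta>" and "palindrome \<beta>"
  shows "L_unique \<beta> \<and> (\<forall>\<alpha>. composition \<alpha> \<and> Lpoly \<alpha> = Lpoly \<beta> \<longrightarrow> \<alpha> = \<beta>)"
proof -
  have r: "rev \<beta> = \<beta>" using assms(2) by (simp add: palindrome_def)
  have *: "\<forall>\<alpha>. composition \<alpha> \<and> Lpoly \<alpha> = Lpoly \<beta> \<longrightarrow> \<alpha> = \<beta>"
    using main assms by blast
  then have "L_unique \<beta>" unfolding L_unique_def using assms(1) r by auto
  then show ?thesis using * by blast
qed

end
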